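(* Let $E$ be a topological space, let $\Omega\subseteq E$ be a non-empty relatively compact open set with $\partial\Omega\neq\emptyset$, and let $Y$ be a real locally convex Hausdorff topological vector space. For any continuous function $f:\overline{\Omega}\to Y$, the following are equivalent: (b1) $f$ satisfies the convex hull property in $\overline{\Omega}$, i.e. $f(\Omega)\subseteq\overline{\mathrm{conv}}(f(\partial\Omega))$; (b2) for every continuous and quasi-convex function $\psi:Y\to\mathbf{R}$, one has $\sup_{x\in\Omega}\psi(f(x))=\sup_{x\in\partial\Omega}\psi(f(x))$.
   Context: $\overline{\Omega}$ and $\partial\Omega$ are the closure and boundary of $\Omega$ in $E$; $\overline{\mathrm{conv}}(S)$ is the closed convex hull of $S$. A function $\psi:Y\to\mathbf{R}$ is quasi-convex if for each $r\in\mathbf{R}$ the set $\psi^{-1}(]-\infty,r])$ is convex. *)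

theory Defs
  imports "HOL-Analysis.Analysis"
begin

definition quasi_convex :: "('a::real_vector \<Rightarrow> real) \<Rightarrow> bool" where
  "quasi_convex \<psi> \<longleftrightarrow> (\<forall>r. convex {y. \<psi> y \<le> r})"

text \<open>A real locally convex topological vector space structure on a type:
  vector operations are jointly continuous and 0 has a neighbourhood base of
  convex open sets. (Hausdorffness is imposed via the class t2_space.)\<close>
definition locally_convex_tvs :: "'a::{real_vector,topological_space} itself \<Rightarrow> bool" where
  "locally_convex_tvs _ \<longleftrightarrow>
     continuous_on UNIV (\<lambda>p::'a \<times> 'a. fst p + snd p) \<and>
     continuous_on UNIV (\<lambda>p::real \<times> 'a. fst p *\<^sub>R snd p) \<and>
     (\<forall>U::'a set. open U \<and> 0 \<in> U \<longrightarrow> (\<exists>V. open V \<and> convex V \<and> 0 \<in> V \<and> V \<subseteq> U))"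

end

theory Submission
  imports Defs
begin

lemma lc_scale_cont:
  assumes "locally_convex_tvs TYPE('y::{real_vector,topological_space})"
  shows "continuous_on UNIV (\<lambda>x::'y. a *\<^sub>R x + b)"
proof -
  have h1: "continuous_on UNIV (\<lambda>p::'y\<times>'y. fst p + snd p)"
   and h2: "continuous_on UNIV (\<lambda>p::real\<times>'y. fst p *\<^sub>R snd p)"
    using assms unfolding locally_convex_tvs_def by auto
  have "continuous_on UNIV (\<lambda>x::'y. fst (a,x) *\<^sub>R snd (a,x))"
    by (rule continuous_on_compose2[OF h2]) (auto intro!: continuous_intros)
  then have c: "continuous_on UNIV (\<lambda>x::'y. a *\<^sub>R x)" by simp
  have "continuous_on UNIV (\<lambda>x::'y. fst (a *\<^sub>R x, b) + snd (a *\<^sub>R x,b))"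
    by (rule continuous_on_compose2[OF h1]) (auto intro!: continuous_intros c)
  then show ?thesis by simp
qed

lemma lc_ray_cont:
  assumes "locally_convex_tvs TYPE('y::{real_vector,topological_space})"
  shows "continuous_on UNIV (\<lambda>s::real. s *\<^sub>R (z::'y))"
proof -
  have h2: "continuous_on UNIV (\<lambda>p::real\<times>'y. fst p *\<^sub>R snd p)"
    using assms unfolding locally_convex_tvs_def by auto
  have "continuous_on UNIV (\<lambda>s::real. fst (s,z) *\<^sub>R snd (s,z))"
    by (rule continuous_on_compose2[OF h2]) (auto intro!: continuous_intros)
  then show ?thesis by simp
qed

lemma lc_open_aff:
  assumes "locally_convex_tvs TYPE('y::{real_vector,topological_space})" "open (D::'y set)"
  shows "open {x. a *\<^sub>R x + b \<in> D}"
proof -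
  have "\<forall>B. open B \<longrightarrow> open ((\<lambda>x::'y. a *\<^sub>R x + b) -` B \<inter> UNIV)"
    using lc_scale_cont[OF assms(1)] by (simp only: continuous_on_open_vimage[OF open_UNIV])
  then have "open ((\<lambda>x::'y. a *\<^sub>R x + b) -` D \<inter> UNIV)" using assms(2) by blast
  then show ?thesis by (simp add: vimage_def)
qed

definition gz :: "'y::real_vector set \<Rightarrow> 'y \<Rightarrow> real" where
  "gz D z = Inf {t. 0 < t \<and> inverse t *\<^sub>R z \<in> D}"

locale gsetup =
  fixes D :: "'y::{real_vector,topological_space} set"
  assumes lc: "locally_convex_tvs TYPE('y)"
    and oD: "open D" and cD: "convex D" and zD: "0 \<in> D"
begin

lemma absorb: "\<exists>t>0. inverse t *\<^sub>R z \<in> D"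
proof -
  have "\<forall>B. open B \<longrightarrow> open ((\<lambda>s::real. s *\<^sub>R z) -` B \<inter> UNIV)"
    using lc_ray_cont[OF lc] by (simp only: continuous_on_open_vimage[OF open_UNIV])
  then have oS: "open ((\<lambda>s::real. s *\<^sub>R z) -` D \<inter> UNIV)" using oD by blast
  have S0: "(0::real) \<in> (\<lambda>s::real. s *\<^sub>R z) -` D \<inter> UNIV" using zD by simp
  obtain e where e: "e > 0" "ball 0 e \<subseteq> (\<lambda>s::real. s *\<^sub>R z) -` D \<inter> UNIV"
    using open_contains_ball[THEN iffD1, OF oS] S0 by blast
  have "e/2 \<in> ball (0::real) e" using e(1) by simp
  then have "(e/2) *\<^sub>R z \<in> D" using e(2) by blast
  then show ?thesis using e by (intro exI[of _ "inverse (e/2)"]) auto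
qed

lemma mono: assumes "0 < t" "t \<le> s" "inverse t *\<^sub>R z \<in> D" shows "inverse s *\<^sub>R z \<in> D"
proof -
  have "(t/s) *\<^sub>R (inverse t *\<^sub>R z) + (1 - t/s) *\<^sub>R 0 \<in> D"
    using assms zD by (intro convexD[OF cD]) auto
  moreover have "(t/s) *\<^sub>R (inverse t *\<^sub>R z) = inverse s *\<^sub>R z" using assms by (auto simp: inverse_eq_divide)
  ultimately show ?thesis by (metis add.right_neutral scaleR_zero_right)
qed

lemma bdd: "bdd_below {t. 0 < t \<and> inverse t *\<^sub>R z \<in> D}"
  by (rule bdd_belowI[of _ 0]) auto

lemma ne: "{t. 0 < t \<and> inverse t *\<^sub>R z \<in> D} \<noteq> {}" using absorb by auto

lemma nonneg: "0 \<le> gz D z"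
  unfolding gz_def using ne by (intro cInf_greatest) auto

lemma lessD: assumes "gz D z < s" shows "inverse s *\<^sub>R z \<in> D" "0 < s"
proof -
  obtain t where t: "0 < t" "inverse t *\<^sub>R z \<in> D" "t < s"
    using assms unfolding gz_def using cInf_less_iff[OF ne bdd] by auto
  then show "inverse s *\<^sub>R z \<in> D" using mono by auto
  show "0 < s" using t by auto
qed

lemma leI: assumes "0 < s" "inverse s *\<^sub>R z \<in> D" shows "gz D z \<le> s"
  unfolding gz_def using assms by (intro cInf_lower[OF _ bdd]) auto

lemma subadd: "gz D (a + b) \<le> gz D a + gz D b"
proof (rule field_le_epsilon)
  fix e :: real assume e: "0 < e"
  define s where "s = gz D a + e/2"
  define t where "t = gz D b + e/2"
  have s: "0 < s" "inverse s *\<^sub>R a \<in> D" using lessD[of a s] e unfolding s_def by auto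
  have t: "0 < t" "inverse t *\<^sub>R b \<in> D" using lessD[of b t] e unfolding t_def by auto
  have "(s/(s+t)) *\<^sub>R (inverse s *\<^sub>R a) + (t/(s+t)) *\<^sub>R (inverse t *\<^sub>R b) \<in> D"
    using s t by (intro convexD[OF cD]) (auto simp: add_divide_distrib[symmetric])
  moreover have "(s/(s+t)) *\<^sub>R (inverse s *\<^sub>R a) + (t/(s+t)) *\<^sub>R (inverse t *\<^sub>R b)
     = inverse (s+t) *\<^sub>R (a + b)"
  proof -
    have c1: "s/(s+t) * inverse s = inverse (s+t)" using s t by (simp add: field_simps)
    have c2: "t/(s+t) * inverse t = inverse (s+t)" using s t by (simp add: field_simps)
    show ?thesis by (simp only: scaleR_scaleR c1 c2 scaleR_add_right)
  qed
  ultimately have "gz D (a+b) \<le> s + t" using s t by (intro leI) auto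
  then show "gz D (a+b) \<le> gz D a + gz D b + e" unfolding s_def t_def by simp
qed

lemma lt1: assumes "z \<in> D" shows "gz D z < 1"
proof -
  define S where "S = (\<lambda>s::real. s *\<^sub>R z) -` D \<inter> UNIV"
  have "\<forall>B. open B \<longrightarrow> open ((\<lambda>s::real. s *\<^sub>R z) -` B \<inter> UNIV)"
    using lc_ray_cont[OF lc] by (simp only: continuous_on_open_vimage[OF open_UNIV])
  then have oS: "open S" unfolding S_def using oD by blast
  have S1: "(1::real) \<in> S" unfolding S_def using assms by simp
  obtain e where e: "e > 0" "ball 1 e \<subseteq> S"
    using open_contains_ball[THEN iffD1, OF oS] S1 by blast
  have "1 + e/2 \<in> ball (1::real) e" using e(1) by (simp add: dist_real_def)
  then have "1 + e/2 \<in> S" using e(2) by blast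
  then have m: "(1 + e/2) *\<^sub>R z \<in> D" unfolding S_def by simp
  have p: "0 < inverse (1 + e/2)" using e(1) by simp
  have "gz D z \<le> inverse (1 + e/2)" using leI[OF p] m by simp
  also have "\<dots> < 1" using e(1) by (simp add: field_simps)
  finally show ?thesis .
qed

lemma ge1: assumes "z \<notin> D" shows "gz D z \<ge> 1"
proof (rule ccontr)
  assume "\<not> 1 \<le> gz D z"
  then have "gz D z < 1" by simp
  from lessD(1)[OF this] show False using assms by simp
qed

lemma qconv: "quasi_convex (gz D)"
  unfolding quasi_convex_def
proof (intro allI convexI)
  fix r :: real and x y :: 'y and u v :: real
  assume x: "x \<in> {y. gz D y \<le> r}" and y: "y \<in> {y. gz D y \<le> r}" and uv: "0 \<le> u" "0 \<le> v" "u + v = 1"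
  have "gz D (u *\<^sub>R x + v *\<^sub>R y) \<le> s" if s: "s > r" for s
  proof -
    have xs: "inverse s *\<^sub>R x \<in> D" "0 < s" using lessD[of x s] x s by auto
    have ys: "inverse s *\<^sub>R y \<in> D" using lessD[of y s] y s by auto
    have "u *\<^sub>R (inverse s *\<^sub>R x) + v *\<^sub>R (inverse s *\<^sub>R y) \<in> D"
      using xs ys uv by (intro convexD[OF cD]) auto
    moreover have "inverse s *\<^sub>R (u *\<^sub>R x + v *\<^sub>R y) = u *\<^sub>R (inverse s *\<^sub>R x) + v *\<^sub>R (inverse s *\<^sub>R y)"
      by (simp add: scaleR_add_right algebra_simps)
    ultimately show ?thesis using xs(2) by (intro leI) auto
  qed
  then show "u *\<^sub>R x + v *\<^sub>R y \<in> {y. gz D y \<le> r}" by (auto intro: dense_ge)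
qed

lemma cont: "continuous_on UNIV (gz D)"
proof -
  have "(gz D \<longlongrightarrow> gz D z) (at z within UNIV)" for z
  proof (rule order_tendstoI)
    fix a assume a: "gz D z < a"
    then obtain t where t: "gz D z < t" "t < a" using dense by blast
    have zt: "inverse t *\<^sub>R z \<in> D" "0 < t" using lessD[OF t(1)] by auto
    show "eventually (\<lambda>x. gz D x < a) (at z within UNIV)"
      unfolding eventually_at_topological
    proof (intro exI conjI ballI impI)
      show "open {x. inverse t *\<^sub>R x + 0 \<in> D}" by (rule lc_open_aff[OF lc oD])
      show "z \<in> {x. inverse t *\<^sub>R x + 0 \<in> D}" using zt by simp
      fix x assume "x \<in> {x. inverse t *\<^sub>R x + 0 \<in> D}" "x \<noteq> z" "x \<in> UNIV"
      then have "gz D x \<le> t" using zt by (intro leI) auto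
      then show "gz D x < a" using t by simp
    qed
  next
    fix a assume a: "a < gz D z"
    define d where "d = (gz D z - a)/2"
    have d: "d > 0" using a unfolding d_def by simp
    show "eventually (\<lambda>x. a < gz D x) (at z within UNIV)"
      unfolding eventually_at_topological
    proof (intro exI conjI ballI impI)
      show "open {x. (- inverse d) *\<^sub>R x + inverse d *\<^sub>R z \<in> D}" by (rule lc_open_aff[OF lc oD])
      show "z \<in> {x. (- inverse d) *\<^sub>R x + inverse d *\<^sub>R z \<in> D}" using zD by simp
      fix x assume "x \<in> {x. (- inverse d) *\<^sub>R x + inverse d *\<^sub>R z \<in> D}" "x \<noteq> z" "x \<in> UNIV"
      then have "inverse d *\<^sub>R (z - x) \<in> D" by (simp add: scaleR_diff_right)
      then have "gz D (z - x) \<le> d" using d by (intro leI) auto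
      moreover have "gz D z \<le> gz D x + gz D (z - x)" using subadd[of x "z - x"] by simp
      ultimately have e1: "gz D z - d \<le> gz D x" by linarith
      have e2: "a < gz D z - d" unfolding d_def using a by (simp add: field_simps)
      show "a < gz D x" using e1 e2 by linarith
    qed
  qed
  then show ?thesis by (simp add: continuous_on_def)
qed

end

theorem proposition2:
  fixes \<Omega> :: "'e::topological_space set"
    and f :: "'e \<Rightarrow> 'y::{real_vector,t2_space}"
  assumes "locally_convex_tvs TYPE('y)"
    and "open \<Omega>" and "\<Omega> \<noteq> {}" and "compact (closure \<Omega>)" and "frontier \<Omega> \<noteq> {}"
    and "continuous_on (closure \<Omega>) f"
  shows "f ` \<Omega> \<subseteq> closure (convex hull (f ` frontier \<Omega>)) \<longleftrightarrow>
    (\<forall>\<psi>::'y \<Rightarrow> real. continuous_on UNIV \<psi> \<and> quasi_convex \<psi> \<longrightarrow>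
       (SUP x\<in>\<Omega>. \<psi> (f x)) = (SUP x\<in>frontier \<Omega>. \<psi> (f x)))"
proof -
  have fr_sub: "frontier \<Omega> \<subseteq> closure \<Omega>" by (auto simp: frontier_def)
  have cfr: "compact (frontier \<Omega>)"
    using compact_Int_closed[OF assms(4) frontier_closed, of \<Omega>] fr_sub by (simp add: Int_absorb1)
  have aux: "continuous_on (closure \<Omega>) (\<lambda>x. \<psi> (f x)) \<and>
      bdd_above ((\<lambda>x. \<psi> (f x)) ` \<Omega>) \<and> bdd_above ((\<lambda>x. \<psi> (f x)) ` frontier \<Omega>)"
    if cont: "continuous_on UNIV \<psi>" for \<psi> :: "'y \<Rightarrow> real"
  proof -
    have cg: "continuous_on (closure \<Omega>) (\<lambda>x. \<psi> (f x))"
      by (rule continuous_on_compose2[OF cont assms(6)]) auto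
    have bC: "bdd_above ((\<lambda>x. \<psi> (f x)) ` closure \<Omega>)"
      by (intro bounded_imp_bdd_above compact_imp_bounded compact_continuous_image cg assms(4))
    have "bdd_above ((\<lambda>x. \<psi> (f x)) ` \<Omega>)"
      by (rule bdd_above_mono[OF bC]) (intro image_mono closure_subset)
    moreover have "bdd_above ((\<lambda>x. \<psi> (f x)) ` frontier \<Omega>)"
      by (rule bdd_above_mono[OF bC]) (intro image_mono fr_sub)
    ultimately show ?thesis using cg by blast
  qed
  show ?thesis
  proof
    assume H: "f ` \<Omega> \<subseteq> closure (convex hull (f ` frontier \<Omega>))"
    show "\<forall>\<psi>::'y \<Rightarrow> real. continuous_on UNIV \<psi> \<and> quasi_convex \<psi> \<longrightarrow>
       (SUP x\<in>\<Omega>. \<psi> (f x)) = (SUP x\<in>frontier \<Omega>. \<psi> (f x))"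
    proof (intro allI impI, elim conjE)
      fix \<psi> :: "'y \<Rightarrow> real" assume cont: "continuous_on UNIV \<psi>" and qc: "quasi_convex \<psi>"
      note A = aux[OF cont]
      have cg: "continuous_on (closure \<Omega>) (\<lambda>x. \<psi> (f x))" and bO: "bdd_above ((\<lambda>x. \<psi> (f x)) ` \<Omega>)"
        and bF: "bdd_above ((\<lambda>x. \<psi> (f x)) ` frontier \<Omega>)" using A by auto
      define r where "r = (SUP x\<in>frontier \<Omega>. \<psi> (f x))"
      define L where "L = {y. \<psi> y \<le> r}"
      have cL: "closed L" unfolding L_def by (rule closed_Collect_le[OF cont continuous_on_const])
      have vL: "convex L" using qc unfolding L_def quasi_convex_def by blast
      have "f ` frontier \<Omega> \<subseteq> L" unfolding L_def r_def using cSUP_upper[OF _ bF] by auto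
      then have "convex hull (f ` frontier \<Omega>) \<subseteq> L" using vL by (rule hull_minimal)
      then have "closure (convex hull (f ` frontier \<Omega>)) \<subseteq> L" using cL by (rule closure_minimal)
      then have le: "\<forall>x\<in>\<Omega>. \<psi> (f x) \<le> r" using H unfolding L_def by auto
      have 1: "(SUP x\<in>\<Omega>. \<psi> (f x)) \<le> r" using le by (intro cSUP_least[OF assms(3)]) auto
      define M where "M = (SUP x\<in>\<Omega>. \<psi> (f x))"
      have "(\<lambda>x. \<psi> (f x)) ` \<Omega> \<subseteq> {..M}" unfolding M_def using cSUP_upper[OF _ bO] by auto
      then have "(\<lambda>x. \<psi> (f x)) ` closure \<Omega> \<subseteq> {..M}"
        by (rule image_closure_subset[OF cg closed_atMost])
      then have "r \<le> M" unfolding r_def using fr_sub by (intro cSUP_least[OF assms(5)]) auto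
      with 1 show "(SUP x\<in>\<Omega>. \<psi> (f x)) = (SUP x\<in>frontier \<Omega>. \<psi> (f x))"
        unfolding M_def r_def by simp
    qed
  next
    assume H2: "\<forall>\<psi>::'y \<Rightarrow> real. continuous_on UNIV \<psi> \<and> quasi_convex \<psi> \<longrightarrow>
       (SUP x\<in>\<Omega>. \<psi> (f x)) = (SUP x\<in>frontier \<Omega>. \<psi> (f x))"
    define K0 where "K0 = convex hull (f ` frontier \<Omega>)"
    define C where "C = closure K0"
    show "f ` \<Omega> \<subseteq> closure (convex hull (f ` frontier \<Omega>))"
    proof (rule ccontr)
      assume "\<not> ?thesis"
      then obtain x0 where x0: "x0 \<in> \<Omega>" "f x0 \<notin> C" unfolding C_def K0_def by auto
      define y0 where "y0 = f x0"
      obtain b0 where b0: "b0 \<in> frontier \<Omega>" using assms(5) by auto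
      define c where "c = f b0"
      have fK: "f b \<in> K0" if "b \<in> frontier \<Omega>" for b
        unfolding K0_def using that by (intro hull_inc) auto
      have KC: "K0 \<subseteq> C" unfolding C_def by (rule closure_subset)
      define U where "U = {w. (-1) *\<^sub>R w + y0 \<in> - C}"
      have oU: "open U" unfolding U_def
        by (rule lc_open_aff[OF assms(1)]) (auto simp: C_def)
      have U0: "0 \<in> U" unfolding U_def y0_def using x0 by simp
      obtain W where W: "open W" "convex W" "0 \<in> W" "W \<subseteq> U"
        using assms(1) oU U0 unfolding locally_convex_tvs_def by blast
      define D where "D = {z. \<exists>k\<in>K0. \<exists>w\<in>W. z = k + w - c}"
      have Deq: "D = (\<Union>k\<in>K0. {z. 1 *\<^sub>R z + (c - k) \<in> W})"
      proof (intro equalityI subsetI)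
        fix z assume "z \<in> D"
        then obtain k w where kw: "k \<in> K0" "w \<in> W" "z = k + w - c" unfolding D_def by blast
        then have "1 *\<^sub>R z + (c - k) = w" by (simp add: algebra_simps)
        then have "z \<in> {z. 1 *\<^sub>R z + (c - k) \<in> W}" using kw(2) by simp
        then show "z \<in> (\<Union>k\<in>K0. {z. 1 *\<^sub>R z + (c - k) \<in> W})" using kw(1) by blast
      next
        fix z assume "z \<in> (\<Union>k\<in>K0. {z. 1 *\<^sub>R z + (c - k) \<in> W})"
        then obtain k where k: "k \<in> K0" "z + (c - k) \<in> W" by auto
        have "z = k + (z + (c - k)) - c" by (simp add: algebra_simps)
        then show "z \<in> D" unfolding D_def using k by blast
      qed
      have oD: "open D" unfolding Deq
        by (intro open_UN ballI lc_open_aff[OF assms(1) W(1)])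
      have vK: "convex K0" unfolding K0_def by (rule convex_convex_hull)
      have vD: "convex D"
      proof (rule convexI)
        fix z1 z2 and u v :: real assume z: "z1 \<in> D" "z2 \<in> D" and uv: "0 \<le> u" "0 \<le> v" "u + v = 1"
        obtain k1 w1 where 1: "k1 \<in> K0" "w1 \<in> W" "z1 = k1 + w1 - c" using z(1) unfolding D_def by auto
        obtain k2 w2 where 2: "k2 \<in> K0" "w2 \<in> W" "z2 = k2 + w2 - c" using z(2) unfolding D_def by auto
        have "u *\<^sub>R k1 + v *\<^sub>R k2 \<in> K0" using 1 2 uv by (intro convexD[OF vK])
        moreover have "u *\<^sub>R w1 + v *\<^sub>R w2 \<in> W" using 1 2 uv by (intro convexD[OF W(2)])
        moreover have "u *\<^sub>R z1 + v *\<^sub>R z2 = (u *\<^sub>R k1 + v *\<^sub>R k2) + (u *\<^sub>R w1 + v *\<^sub>R w2) - c"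
        proof -
          have "c = u *\<^sub>R c + v *\<^sub>R c" using uv by (metis scaleR_add_left scaleR_one)
          then show ?thesis unfolding 1 2 by (simp add: algebra_simps)
        qed
        ultimately show "u *\<^sub>R z1 + v *\<^sub>R z2 \<in> D" unfolding D_def by blast
      qed
      have cK: "c \<in> K0" unfolding c_def by (rule fK[OF b0])
      have D0: "0 \<in> D" unfolding D_def
        by (intro CollectI bexI[of _ c] bexI[of _ 0] cK W(3)) simp
      interpret gsetup D using assms(1) oD vD D0 by unfold_locales
      define \<psi> where "\<psi> = (\<lambda>y. gz D (y - c))"
      have cpsi: "continuous_on UNIV \<psi>"
      proof -
        have "continuous_on UNIV (\<lambda>y. gz D (1 *\<^sub>R y + (- c)))"
          by (rule continuous_on_compose2[OF cont lc_scale_cont[OF assms(1)]]) auto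
        then show ?thesis unfolding \<psi>_def by simp
      qed
      have qpsi: "quasi_convex \<psi>"
        unfolding quasi_convex_def
      proof (intro allI convexI)
        fix r :: real and y1 y2 :: 'y and u v :: real
        assume y: "y1 \<in> {y. \<psi> y \<le> r}" "y2 \<in> {y. \<psi> y \<le> r}" and uv: "0 \<le> u" "0 \<le> v" "u + v = 1"
        have "u *\<^sub>R (y1 - c) + v *\<^sub>R (y2 - c) \<in> {z. gz D z \<le> r}"
          using y uv qconv unfolding quasi_convex_def \<psi>_def by (intro convexD) auto
        moreover have "u *\<^sub>R (y1 - c) + v *\<^sub>R (y2 - c) = u *\<^sub>R y1 + v *\<^sub>R y2 - c"
        proof -
          have "c = u *\<^sub>R c + v *\<^sub>R c" using uv by (metis scaleR_add_left scaleR_one)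
          then show ?thesis by (simp add: algebra_simps)
        qed
        ultimately show "u *\<^sub>R y1 + v *\<^sub>R y2 \<in> {y. \<psi> y \<le> r}" unfolding \<psi>_def by simp
      qed
      have eq: "(SUP x\<in>\<Omega>. \<psi> (f x)) = (SUP x\<in>frontier \<Omega>. \<psi> (f x))" using H2 cpsi qpsi by blast
      note A = aux[OF cpsi]
      have small: "\<psi> (f b) < 1" if "b \<in> frontier \<Omega>" for b
      proof -
        have "f b - c \<in> D" unfolding D_def
          by (intro CollectI bexI[of _ "f b"] bexI[of _ 0] fK[OF that] W(3)) simp
        then show ?thesis unfolding \<psi>_def by (rule lt1)
      qed
      have cpt: "compact ((\<lambda>x. \<psi> (f x)) ` frontier \<Omega>)"
        using A fr_sub by (intro compact_continuous_image cfr) (auto intro: continuous_on_subset)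
      obtain s where s: "s \<in> (\<lambda>x. \<psi> (f x)) ` frontier \<Omega>" "\<forall>t\<in>(\<lambda>x. \<psi> (f x)) ` frontier \<Omega>. t \<le> s"
        using compact_attains_sup[OF cpt] assms(5) by auto
      have "(SUP x\<in>frontier \<Omega>. \<psi> (f x)) = s" using s by (intro cSup_eq_maximum) auto
      then have F1: "(SUP x\<in>frontier \<Omega>. \<psi> (f x)) < 1" using s(1) small by auto
      have "y0 - c \<notin> D"
      proof
        assume "y0 - c \<in> D"
        then obtain k w where kw: "k \<in> K0" "w \<in> W" "y0 - c = k + w - c" unfolding D_def by auto
        then have "(-1) *\<^sub>R w + y0 = k" by (simp add: algebra_simps)
        moreover have "w \<in> U" using kw(2) W(4) by blast
        then have "(-1) *\<^sub>R w + y0 \<notin> C" unfolding U_def by simp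
        ultimately show False using kw(1) KC by auto
      qed
      then have "1 \<le> \<psi> (f x0)" unfolding \<psi>_def y0_def by (rule ge1)
      also have "\<dots> \<le> (SUP x\<in>\<Omega>. \<psi> (f x))" using A x0(1) by (intro cSUP_upper) auto
      finally show False using eq F1 by simp
    qed
  qed
qed

end
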